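(* Let Assumptions 1 and 2 (stated in the context) hold. Then there exist constants $c_\tau>0$ and $0<C_\tau<\infty$ depending only on $\zeta=(c_f,c_W,C_F,C_T,w_1,w_2,x_1,x_2,\tilde x_1,\tilde x_2)$ such that $\tau(a)\le C_\tau$ for all $a\le c_\tau$.
   Context: Let $(X,W)$ be a random pair with values in $[0,1]^2$; $F_{X|W}(x|w)$, $f_{X|W}(x|w)$, $f_{X,W}$, $f_W$ denote the conditional distribution function of $X$ given $W=w$, the conditional density, the joint density and the marginal density of $W$. Fix constants $0\le x_1<\tilde x_1<\tilde x_2<x_2\le1$ and $0<w_1<w_2<1$. "Increasing" means non-decreasing and "decreasing" means non-increasing. Assumption 1 (Monotone IV): (a) for all $x,w',w''\in(0,1)$ with $w'\le w''$, $F_{X|W}(x|w')\ge F_{X|W}(x|w'')$; (b) there is a constant $C_F>1$ such that $F_{X|W}(x|w_1)\ge C_F F_{X|W}(x|w_2)$ for all $x\in(0,x_2)$, and $C_F(1-F_{X|W}(x|w_1))\le 1-F_{X|W}(x|w_2)$ for all $x\in(x_1,1)$. Assumption 2 (Density): (i) $(X,W)$ has a density $f_{X,W}$ with respect to Lebesgue measure on $[0,1]^2$ with $\int_0^1\int_0^1 f_{X,W}(x,w)^2\,dx\,dw\le C_T$ for a finite constant $C_T$; (ii) there is $c_f>0$ with $f_{X|W}(x|w)\ge c_f$ for all $x\in[x_1,x_2]$ and $w\in\{w_1,w_2\}$; (iii) there are constants $0<c_W\le C_W<\infty$ with $c_W\le f_W(w)\le C_W$ for all $w\in[0,1]$. The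 operator $T:L^2[0,1]\to L^2[0,1]$ is $(Th)(w)=E[h(X)\mid W=w]f_W(w)=\int_0^1 h(x)f_{X,W}(x,w)\,dx$. The truncated norm is $\|h\|_{2,t}=\big(\int_{\tilde x_1}^{\tilde x_2}h(x)^2dx\big)^{1/2}$. For $a\in\mathbb R$, $\mathcal H(a)=\{h\in L^2[0,1]:\ \inf_{0\le x'<x''\le1}\frac{h(x'')-h(x')}{x''-x'}\ge -a\}$, and the restricted measure of ill-posedness is $\tau(a)=\sup\{\|h\|_{2,t}/\|Th\|_2:\ h\in\mathcal H(a),\ \|h\|_{2,t}=1\}$. *)

theory Defs
  imports "HOL-Analysis.Analysis"
begin

text \<open>The joint density of (X,W) is represented by f :: real => real => real,
  with f x w the density at (x,w); only its values on [0,1]^2 matter.\<close>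

definition fW :: "(real \<Rightarrow> real \<Rightarrow> real) \<Rightarrow> real \<Rightarrow> real" where
  "fW f w = (LINT x:{0..1}|lborel. f x w)"

definition condCDF :: "(real \<Rightarrow> real \<Rightarrow> real) \<Rightarrow> real \<Rightarrow> real \<Rightarrow> real" where
  "condCDF f x w = (LINT t:{0..x}|lborel. f t w) / fW f w"

definition condDens :: "(real \<Rightarrow> real \<Rightarrow> real) \<Rightarrow> real \<Rightarrow> real \<Rightarrow> real" where
  "condDens f x w = f x w / fW f w"

definition L2 :: "(real \<Rightarrow> real) \<Rightarrow> bool" where
  "L2 h \<longleftrightarrow> set_borel_measurable lborel {0..1} h \<and>
            set_integrable lborel {0..1} (\<lambda>x. (h x)^2)"

definition Top :: "(real \<Rightarrow> real \<Rightarrow> real) \<Rightarrow> (real \<Rightarrow> real) \<Rightarrow> real \<Rightarrow> real" where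
  "Top f h w = (LINT x:{0..1}|lborel. h x * f x w)"

definition L2norm :: "(real \<Rightarrow> real) \<Rightarrow> real" where
  "L2norm g = sqrt (LINT x:{0..1}|lborel. (g x)^2)"

definition trunc_norm :: "real \<Rightarrow> real \<Rightarrow> (real \<Rightarrow> real) \<Rightarrow> real" where
  "trunc_norm xt1 xt2 h = sqrt (LINT x:{xt1..xt2}|lborel. (h x)^2)"

definition Hclass :: "real \<Rightarrow> (real \<Rightarrow> real) set" where
  "Hclass a = {h. L2 h \<and>
     (\<forall>x' x''. 0 \<le> x' \<and> x' < x'' \<and> x'' \<le> 1 \<longrightarrow> (h x'' - h x') / (x'' - x') \<ge> - a)}"

definition tau :: "real \<Rightarrow> real \<Rightarrow> (real \<Rightarrow> real \<Rightarrow> real) \<Rightarrow> real \<Rightarrow> ereal" where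
  "tau xt1 xt2 f a = Sup ((\<lambda>h. if L2norm (Top f h) = 0 then \<infinity>
        else ereal (trunc_norm xt1 xt2 h / L2norm (Top f h)))
     ` {h \<in> Hclass a. trunc_norm xt1 xt2 h = 1})"

end

theory Submission imports Defs begin

definition Qf :: "(real\<Rightarrow>real) \<Rightarrow> (real\<Rightarrow>real) \<Rightarrow> real \<Rightarrow> real" where
  "Qf \<phi> q t = (LINT x:{0..1}|lborel. (if t < \<phi> x then q x else 0))"

lemma layer:
  fixes \<phi> q :: "real \<Rightarrow> real"
  assumes mono: "mono \<phi>" and qm[measurable]: "q \<in> borel_measurable borel"
    and qi: "set_integrable lborel {0..1} q" and q0: "\<And>x. x\<in>{0..1} \<Longrightarrow> 0 \<le> q x"
    and L: "L \<le> \<phi> 0" and U: "\<phi> 1 \<le> U"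
  shows "set_integrable lborel {L..U} (Qf \<phi> q)"
    "(LINT x:{0..1}|lborel. \<phi> x * q x) = L * (LINT x:{0..1}|lborel. q x) + (LINT t:{L..U}|lborel. Qf \<phi> q t)"
proof -
  have pm[measurable]: "\<phi> \<in> borel_measurable borel" using borel_measurable_mono[OF mono] .
  have phiL: "L \<le> \<phi> x" "\<phi> x \<le> U" if "x \<in> {0..1}" for x
    using that mono L U by (auto dest: monoD[of \<phi> 0 x] monoD[of \<phi> x 1] simp: order_trans)
  define F where "F = (\<lambda>x t. indicator {0..1} x * indicator {L..U} t * (if t < \<phi> x then q x else (0::real)))"
  have Fm[measurable]: "case_prod F \<in> borel_measurable (lborel \<Otimes>\<^sub>M lborel)"
    unfolding F_def by measurable
  have qi': "integrable lborel (\<lambda>x. indicator {0..1} x * q x)"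
    using qi by (simp add: set_integrable_def)
  have inner_t: "(\<integral>t. F x t \<partial>lborel) = indicator {0..1} x * q x * (\<phi> x - L)" for x
  proof (cases "x \<in> {0..1}")
    case True
    have "(\<lambda>t. F x t) = (\<lambda>t. q x * indicator {L..<\<phi> x} t)"
      using phiL[OF True] True by (auto simp: F_def fun_eq_iff split: split_indicator)
    then show ?thesis using True phiL[OF True] by simp
  next
    case False then show ?thesis by (simp add: F_def)
  qed
  have int1: "integrable lborel (\<lambda>x. indicator {0..1} x * q x * (\<phi> x - L))"
  proof (rule Bochner_Integration.integrable_bound[OF integrable_mult_right[OF qi', of "U - L"]])
    show "AE x in lborel. norm (indicator {0..1} x * q x * (\<phi> x - L)) \<le> norm ((U - L) * (indicator {0..1} x * q x))"
    proof (rule AE_I2)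
      fix x show "norm (indicator {0..1} x * q x * (\<phi> x - L)) \<le> norm ((U - L) * (indicator {0..1} x * q x))"
      proof (cases "x \<in> {0..1}")
        case True
        then have "q x * (\<phi> x - L) \<le> (U - L) * q x" "0 \<le> q x * (\<phi> x - L)"
          using phiL[OF True] q0[OF True] by (auto simp: mult.commute intro: mult_left_mono)
        then show ?thesis using True phiL[OF True] q0[OF True] by (simp add: abs_mult)
      qed simp
    qed
  qed measurable
  have Fint: "integrable (lborel \<Otimes>\<^sub>M lborel) (case_prod F)"
  proof (rule lborel_pair.Fubini_integrable)
    show "integrable lborel (\<lambda>x. \<integral>y. norm (case_prod F (x, y)) \<partial>lborel)"
    proof -
      have "(\<lambda>x. \<integral>y. norm (case_prod F (x, y)) \<partial>lborel) = (\<lambda>x. \<integral>t. F x t \<partial>lborel)"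
        using q0 by (auto simp: F_def intro!: ext Bochner_Integration.integral_cong split: split_indicator)
      then show ?thesis using int1 inner_t by simp
    qed
    show "AE x in lborel. integrable lborel (\<lambda>y. case_prod F (x, y))"
    proof (rule AE_I2)
      fix x
      have "integrable lborel (\<lambda>t. indicator {L..U} t * (indicator {0..1} x * (if t < \<phi> x then q x else 0)))"
      proof (rule Bochner_Integration.integrable_bound[of _ "\<lambda>t. \<bar>q x\<bar> * indicator {L..U} t"])
        have "integrable lborel (indicator {L..U} :: real \<Rightarrow> real)"
          by (cases "L \<le> U") (simp_all add: integrable_indicator_iff)
        then show "integrable lborel (\<lambda>t. \<bar>q x\<bar> * indicator {L..U} t)"
          by (rule integrable_mult_right)
      qed (auto split: split_indicator)
      then show "integrable lborel (\<lambda>y. case_prod F (x, y))"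
        by (simp add: F_def mult_ac)
    qed
  qed fact
  have inner_x: "(\<integral>x. F x t \<partial>lborel) = indicator {L..U} t * Qf \<phi> q t" for t
  proof -
    have "(\<integral>x. F x t \<partial>lborel) = (\<integral>x. indicator {L..U} t * (indicator {0..1} x * (if t < \<phi> x then q x else 0)) \<partial>lborel)"
      by (simp add: F_def mult_ac)
    also have "\<dots> = indicator {L..U} t * Qf \<phi> q t"
      unfolding Qf_def set_lebesgue_integral_def by (subst integral_mult_right_zero) simp
    finally show ?thesis .
  qed
  from lborel_pair.integrable_snd[OF Fint] show "set_integrable lborel {L..U} (Qf \<phi> q)"
    unfolding inner_x set_integrable_def by (simp add: mult_ac)
  have "(LINT t:{L..U}|lborel. Qf \<phi> q t) = (\<integral>x. indicator {0..1} x * q x * (\<phi> x - L) \<partial>lborel)"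
    using lborel_pair.Fubini_integral[OF Fint] unfolding inner_x inner_t
    by (simp add: set_lebesgue_integral_def)
  also have "\<dots> = (\<integral>x. indicator {0..1} x * (\<phi> x * q x) - L * (indicator {0..1} x * q x) \<partial>lborel)"
    by (rule Bochner_Integration.integral_cong) (auto simp: algebra_simps)
  also have "\<dots> = (LINT x:{0..1}|lborel. \<phi> x * q x) - L * (LINT x:{0..1}|lborel. q x)"
  proof -
    have i2: "integrable lborel (\<lambda>x. indicator {0..1} x * (\<phi> x * q x))"
      using Bochner_Integration.integrable_add[OF int1 integrable_mult_right[OF qi', of L]]
      by (simp add: algebra_simps)
    show ?thesis using i2 qi'
      by (simp add: set_lebesgue_integral_def)
  qed
  finally show "(LINT x:{0..1}|lborel. \<phi> x * q x) = L * (LINT x:{0..1}|lborel. q x) + (LINT t:{L..U}|lborel. Qf \<phi> q t)"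
    by simp
qed

definition splitpt :: "(real\<Rightarrow>real) \<Rightarrow> real \<Rightarrow> real" where
  "splitpt \<phi> t = (if {x\<in>{0..1}. t < \<phi> x} = {} then 1 else Inf {x\<in>{0..1}. t < \<phi> x})"

lemma split_props:
  fixes \<phi> :: "real \<Rightarrow> real"
  assumes mono: "mono \<phi>"
  shows "splitpt \<phi> t \<in> {0..1}" "\<And>x. x\<in>{0..1} \<Longrightarrow> x < splitpt \<phi> t \<Longrightarrow> \<phi> x \<le> t"
    "\<And>x. x\<in>{0..1} \<Longrightarrow> splitpt \<phi> t < x \<Longrightarrow> t < \<phi> x"
proof -
  define S where "S = {x\<in>{0..1}. t < \<phi> x}"
  have "splitpt \<phi> t \<in> {0..1} \<and> (\<forall>x\<in>{0..1}. x < splitpt \<phi> t \<longrightarrow> \<phi> x \<le> t) \<and> (\<forall>x\<in>{0..1}. splitpt \<phi> t < x \<longrightarrow> t < \<phi> x)"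
  proof (cases "S = {}")
    case True
    then have e: "{x\<in>{0..1}. t < \<phi> x} = {}" by (simp add: S_def)
    have "splitpt \<phi> t = 1" unfolding splitpt_def by (subst e) simp
    then show ?thesis using True by (auto simp: S_def not_less)
  next
    case False
    have sp: "splitpt \<phi> t = Inf S" unfolding splitpt_def S_def[symmetric] using False by simp
    have bdd: "bdd_below S" unfolding S_def by (rule bdd_belowI[of _ 0]) auto
    have "Inf S \<ge> 0" using False by (intro cInf_greatest) (auto simp: S_def)
    moreover obtain y where y: "y \<in> S" using False by auto
    then have "Inf S \<le> 1" using cInf_lower[OF y bdd] by (auto simp: S_def)
    moreover have "\<phi> x \<le> t" if "x\<in>{0..1}" "x < Inf S" for x
      using cInf_lower[of x S] bdd that by (force simp: S_def not_less)
    moreover have "t < \<phi> x" if "x\<in>{0..1}" "Inf S < x" for x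
    proof -
      obtain z where "z \<in> S" "z < x" using cInf_lessD[OF False \<open>Inf S < x\<close>] by auto
      then show ?thesis using monoD[OF mono, of z x] by (auto simp: S_def)
    qed
    ultimately show ?thesis unfolding sp by auto
  qed
  then show "splitpt \<phi> t \<in> {0..1}" "\<And>x. x\<in>{0..1} \<Longrightarrow> x < splitpt \<phi> t \<Longrightarrow> \<phi> x \<le> t"
    "\<And>x. x\<in>{0..1} \<Longrightarrow> splitpt \<phi> t < x \<Longrightarrow> t < \<phi> x" by auto
qed

lemma Qf_rep:
  fixes \<phi> q :: "real \<Rightarrow> real"
  assumes mono: "mono \<phi>" and qm[measurable]: "q \<in> borel_measurable borel"
    and qi: "set_integrable lborel {0..1} q"
  shows "Qf \<phi> q t = (LINT x:{0..1}|lborel. q x) - (LINT x:{0..splitpt \<phi> t}|lborel. q x)"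
proof -
  define s where "s = splitpt \<phi> t"
  note sp = split_props[OF mono, where t=t, folded s_def]
  have pm[measurable]: "\<phi> \<in> borel_measurable borel" using borel_measurable_mono[OF mono] .
  have "Qf \<phi> q t = (LINT x:{s<..1}|lborel. q x)"
    unfolding Qf_def set_lebesgue_integral_def
  proof (rule integral_cong_AE)
    show "AE x in lborel. indicator {0..1} x *\<^sub>R (if t < \<phi> x then q x else 0) = indicator {s<..1} x *\<^sub>R q x"
      using AE_lborel_singleton[of s]
    proof eventually_elim
      case (elim x)
      show ?case
      proof (cases "x \<in> {0..1}")
        case True
        then show ?thesis using sp(2)[OF True] sp(3)[OF True] elim sp(1)
          by (cases "x < s") (auto split: split_indicator)
      next
        case False then show ?thesis using sp(1) by (auto split: split_indicator)
      qed
    qed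
  qed measurable
  moreover have "(LINT x:{0..1}|lborel. q x) = (LINT x:{0..s}|lborel. q x) + (LINT x:{s<..1}|lborel. q x)"
  proof -
    have eq: "{0..1} = {0..s} \<union> {s<..1}" using sp(1) by auto
    have i1: "set_integrable lborel {0..s} q" and i2: "set_integrable lborel {s<..1} q"
      using sp(1) by (auto intro!: set_integrable_subset[OF qi])
    have disj: "{0..s} \<inter> {s<..1} = {}" by auto
    show ?thesis by (subst eq) (rule set_integral_Un[OF disj i1 i2])
  qed
  ultimately show ?thesis by (simp add: s_def)
qed

lemma Qf_ge:
  fixes \<phi> q :: "real \<Rightarrow> real"
  assumes qi: "set_integrable lborel {0..1} q" and q0: "\<And>x. x\<in>{0..1} \<Longrightarrow> 0 \<le> q x"
    and ab: "0 \<le> a" "b \<le> 1" and gt: "\<And>x. x\<in>{a..b} \<Longrightarrow> t < \<phi> x"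
    and pm[measurable]: "\<phi> \<in> borel_measurable borel" and qm[measurable]: "q \<in> borel_measurable borel"
  shows "(LINT x:{a..b}|lborel. q x) \<le> Qf \<phi> q t"
proof -
  have "(LINT x:{a..b}|lborel. q x) = (LINT x:{0..1}|lborel. indicator {a..b} x * q x)"
    using ab unfolding set_lebesgue_integral_def
    by (intro Bochner_Integration.integral_cong) (auto split: split_indicator)
  also have "\<dots> \<le> Qf \<phi> q t"
    unfolding Qf_def
  proof (rule set_integral_mono)
    show "set_integrable lborel {0..1} (\<lambda>x. indicator {a..b} x * q x)"
      using qi unfolding set_integrable_def
      by (rule Bochner_Integration.integrable_bound) (auto split: split_indicator)
    show "set_integrable lborel {0..1} (\<lambda>x. if t < \<phi> x then q x else 0)"
      using qi unfolding set_integrable_def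
      by (rule Bochner_Integration.integrable_bound) (auto split: split_indicator)
  qed (use gt q0 in \<open>auto split: split_indicator\<close>)
  finally show ?thesis .
qed

lemma Qf_compl_ge:
  fixes \<phi> q :: "real \<Rightarrow> real"
  assumes qi: "set_integrable lborel {0..1} q" and q0: "\<And>x. x\<in>{0..1} \<Longrightarrow> 0 \<le> q x"
    and ab: "0 \<le> a" "b \<le> 1" and le: "\<And>x. x\<in>{a..b} \<Longrightarrow> \<phi> x \<le> t"
    and pm[measurable]: "\<phi> \<in> borel_measurable borel" and qm[measurable]: "q \<in> borel_measurable borel"
  shows "(LINT x:{a..b}|lborel. q x) \<le> (LINT x:{0..1}|lborel. q x) - Qf \<phi> q t"
proof -
  have i1: "set_integrable lborel {0..1} (\<lambda>x. if t < \<phi> x then q x else 0)"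
      using qi unfolding set_integrable_def
      by (rule Bochner_Integration.integrable_bound) (auto split: split_indicator)
  have "(LINT x:{a..b}|lborel. q x) = (LINT x:{0..1}|lborel. indicator {a..b} x * q x)"
    using ab unfolding set_lebesgue_integral_def
    by (intro Bochner_Integration.integral_cong) (auto split: split_indicator)
  also have "\<dots> \<le> (LINT x:{0..1}|lborel. q x - (if t < \<phi> x then q x else 0))"
  proof (rule set_integral_mono)
    show "set_integrable lborel {0..1} (\<lambda>x. indicator {a..b} x * q x)"
      using qi unfolding set_integrable_def
      by (rule Bochner_Integration.integrable_bound) (auto split: split_indicator)
    show "set_integrable lborel {0..1} (\<lambda>x. q x - (if t < \<phi> x then q x else 0))"
      using qi i1 by auto
  qed (use le q0 in \<open>force split: split_indicator\<close>)
  also have "\<dots> = (LINT x:{0..1}|lborel. q x) - Qf \<phi> q t"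
    unfolding Qf_def using qi i1 by (simp add: set_integral_diff)
  finally show ?thesis .
qed

lemma Qf_nonneg:
  fixes \<phi> q :: "real \<Rightarrow> real"
  assumes q0: "\<And>x. x\<in>{0..1} \<Longrightarrow> 0 \<le> q x"
  shows "0 \<le> Qf \<phi> q t"
  unfolding Qf_def set_lebesgue_integral_def
  by (rule Bochner_Integration.integral_nonneg) (auto simp: q0 split: split_indicator)

lemma int_point0: "(LINT x:{0}|lborel. q x) = (0::real)"
  unfolding set_lebesgue_integral_def
  by (rule integral_eq_zero_AE) (auto intro: eventually_mono[OF AE_lborel_singleton[of 0]])

lemma int_lower:
  fixes q :: "real \<Rightarrow> real"
  assumes "a \<le> b" "set_integrable lborel {a..b} q" "\<And>x. x\<in>{a..b} \<Longrightarrow> c \<le> q x"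
  shows "c * (b - a) \<le> (LINT x:{a..b}|lborel. q x)"
proof -
  have "(LINT x:{a..b}|lborel. c) = c * (b - a)"
    using assms(1) by (simp add: set_integral_const)
  moreover have "(LINT x:{a..b}|lborel. c) \<le> (LINT x:{a..b}|lborel. q x)"
  proof (rule set_integral_mono)
    show "set_integrable lborel {a..b} (\<lambda>x. c)"
      unfolding set_integrable_def using assms(1) by (intro integrable_scaleR_left) (simp add: integrable_indicator_iff)
  qed (use assms in auto)
  ultimately show ?thesis by simp
qed

lemma int_ind:
  fixes L U a b :: real
  assumes "L \<le> a" "a \<le> b" "b \<le> U"
  shows "(LINT t:{L..U}|lborel. indicator {a..<b} t) = b - a"
proof -
  have "(LINT t:{L..U}|lborel. (indicator {a..<b} t :: real)) = (\<integral>t. indicator {a..<b} t \<partial>lborel)"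
    unfolding set_lebesgue_integral_def using assms
    by (intro Bochner_Integration.integral_cong) (auto split: split_indicator)
  also have "\<dots> = b - a" using assms by simp
  finally show ?thesis .
qed

lemma int_ind_integrable:
  fixes L U a b c :: real
  shows "set_integrable lborel {L..U} (\<lambda>t. c * indicator {a..<b} t)"
proof -
  have "integrable lborel (\<lambda>t. c * indicator {a..<b} t :: real)"
    by (intro integrable_mult_right) (cases "a \<le> b"; simp add: integrable_indicator_iff)
  then show ?thesis unfolding set_integrable_def
    by (rule Bochner_Integration.integrable_bound) (auto split: split_indicator)
qed

lemma int_ind_oo:
  fixes L U a b :: real
  assumes "L \<le> a" "a \<le> b" "b \<le> U"
  shows "(LINT t:{L..U}|lborel. indicator {a<..<b} t) = b - a"
proof -
  have "(LINT t:{L..U}|lborel. (indicator {a<..<b} t :: real)) = (\<integral>t. indicator {a<..<b} t \<partial>lborel)"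
    unfolding set_lebesgue_integral_def using assms
    by (intro Bochner_Integration.integral_cong) (auto split: split_indicator)
  also have "\<dots> = b - a" using assms by simp
  finally show ?thesis .
qed

lemma int_ind_oo_integrable:
  fixes L U a b c :: real
  shows "set_integrable lborel {L..U} (\<lambda>t. c * indicator {a<..<b} t)"
proof -
  have "integrable lborel (\<lambda>t. c * indicator {a<..<b} t :: real)"
    by (intro integrable_mult_right) (cases "a \<le> b"; simp add: integrable_indicator_iff)
  then show ?thesis unfolding set_integrable_def
    by (rule Bochner_Integration.integrable_bound) (auto split: split_indicator)
qed

locale dens_pair =
  fixes \<phi> q1 q2 :: "real \<Rightarrow> real"
  assumes mono: "mono \<phi>"
    and qm1[measurable]: "q1 \<in> borel_measurable borel" and qm2[measurable]: "q2 \<in> borel_measurable borel"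
    and qi1: "set_integrable lborel {0..1} q1" and qi2: "set_integrable lborel {0..1} q2"
    and q01: "\<And>x. x\<in>{0..1} \<Longrightarrow> 0 \<le> q1 x" and q02: "\<And>x. x\<in>{0..1} \<Longrightarrow> 0 \<le> q2 x"
    and tot1: "(LINT x:{0..1}|lborel. q1 x) = 1" and tot2: "(LINT x:{0..1}|lborel. q2 x) = 1"
    and cdf: "\<And>s. s\<in>{0<..<1} \<Longrightarrow> (LINT x:{0..s}|lborel. q2 x) \<le> (LINT x:{0..s}|lborel. q1 x)"
begin

lemma pm[measurable]: "\<phi> \<in> borel_measurable borel" using borel_measurable_mono[OF mono] .

definition "F1 s = (LINT x:{0..s}|lborel. q1 x)"
definition "F2 s = (LINT x:{0..s}|lborel. q2 x)"

lemma Q1: "Qf \<phi> q1 t = 1 - F1 (splitpt \<phi> t)"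
  using Qf_rep[OF mono qm1 qi1] tot1 by (simp add: F1_def)
lemma Q2: "Qf \<phi> q2 t = 1 - F2 (splitpt \<phi> t)"
  using Qf_rep[OF mono qm2 qi2] tot2 by (simp add: F2_def)

lemma F_nonneg: "s \<in> {0..1} \<Longrightarrow> 0 \<le> F1 s" "s \<in> {0..1} \<Longrightarrow> 0 \<le> F2 s"
  unfolding F1_def F2_def set_lebesgue_integral_def
  by (auto intro!: Bochner_Integration.integral_nonneg simp: q01 q02 split: split_indicator)

lemma F_ends: "F1 0 = 0" "F2 0 = 0" "F1 1 = 1" "F2 1 = 1"
  using tot1 tot2 int_point0 by (simp_all add: F1_def F2_def)

lemma Qmono: "Qf \<phi> q1 t \<le> Qf \<phi> q2 t"
proof -
  define s where "s = splitpt \<phi> t"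
  have s01: "s \<in> {0..1}" using split_props(1)[OF mono] s_def by simp
  have "F2 s \<le> F1 s"
  proof (cases "s = 0 \<or> s = 1")
    case True then show ?thesis using F_ends by auto
  next
    case False then show ?thesis using s01 cdf[of s] by (auto simp: F1_def F2_def)
  qed
  then show ?thesis by (simp add: Q1 Q2 s_def)
qed

lemma Q_le1: "Qf \<phi> q1 t \<le> 1" "Qf \<phi> q2 t \<le> 1"
  using F_nonneg split_props(1)[OF mono] by (auto simp: Q1 Q2)

lemma layer1: "L \<le> \<phi> 0 \<Longrightarrow> \<phi> 1 \<le> U \<Longrightarrow> (LINT x:{0..1}|lborel. \<phi> x * q1 x) = L + (LINT t:{L..U}|lborel. Qf \<phi> q1 t)"
  "L \<le> \<phi> 0 \<Longrightarrow> \<phi> 1 \<le> U \<Longrightarrow> set_integrable lborel {L..U} (Qf \<phi> q1)"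
  using layer[OF mono qm1 qi1 q01] tot1 by auto
lemma layer2: "L \<le> \<phi> 0 \<Longrightarrow> \<phi> 1 \<le> U \<Longrightarrow> (LINT x:{0..1}|lborel. \<phi> x * q2 x) = L + (LINT t:{L..U}|lborel. Qf \<phi> q2 t)"
  "L \<le> \<phi> 0 \<Longrightarrow> \<phi> 1 \<le> U \<Longrightarrow> set_integrable lborel {L..U} (Qf \<phi> q2)"
  using layer[OF mono qm2 qi2 q02] tot2 by auto

lemma g_mono: "(LINT x:{0..1}|lborel. \<phi> x * q1 x) \<le> (LINT x:{0..1}|lborel. \<phi> x * q2 x)"
proof -
  have "(LINT t:{\<phi> 0..\<phi> 1}|lborel. Qf \<phi> q1 t) \<le> (LINT t:{\<phi> 0..\<phi> 1}|lborel. Qf \<phi> q2 t)"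
    by (rule set_integral_mono[OF layer1(2) layer2(2)]) (auto simp: Qmono)
  then show ?thesis using layer1(1)[of "\<phi> 0" "\<phi> 1"] layer2(1)[of "\<phi> 0" "\<phi> 1"] by simp
qed

end

locale dens_pair2 = dens_pair +
  fixes C c x1 x2 xt1 xt2 :: real
  assumes C1: "1 \<le> C" and c0: "0 \<le> c"
    and xs: "0 \<le> x1" "x1 < xt1" "xt1 < xt2" "xt2 < x2" "x2 \<le> 1"
    and cdfA: "\<And>s. s\<in>{0<..<x2} \<Longrightarrow> C * (LINT x:{0..s}|lborel. q2 x) \<le> (LINT x:{0..s}|lborel. q1 x)"
    and cdfB: "\<And>s. s\<in>{x1<..<1} \<Longrightarrow> C * (1 - (LINT x:{0..s}|lborel. q1 x)) \<le> 1 - (LINT x:{0..s}|lborel. q2 x)"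
    and dens1: "\<And>x. x\<in>{x1..x2} \<Longrightarrow> c \<le> q1 x" and dens2: "\<And>x. x\<in>{x1..x2} \<Longrightarrow> c \<le> q2 x"
begin

lemma caseA:
  assumes m0: "0 < \<phi> xt2"
  shows "(C-1)*c*(x2-xt2) * \<phi> xt2 \<le> C * (LINT x:{0..1}|lborel. \<phi> x * q2 x) - (LINT x:{0..1}|lborel. \<phi> x * q1 x)"
proof -
  define m where "m = \<phi> xt2"
  define L where "L = min (\<phi> 0) 0"
  define U where "U = \<phi> 1"
  define K1 where "K1 = (C-1)*c*(x2-xt2)"
  have L: "L \<le> \<phi> 0" "L \<le> 0" and U: "\<phi> 1 \<le> U" by (auto simp: L_def U_def)
  have mU: "m \<le> U" using monoD[OF mono, of xt2 1] xs by (simp add: m_def U_def)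
  have m0': "0 < m" using m0 by (simp add: m_def)
  define r where "r t = (C-1)*indicator {L..<0} t + K1*indicator {0..<m} t" for t :: real
  have ri: "set_integrable lborel {L..U} r"
    unfolding r_def by (intro set_integral_add(1) int_ind_integrable)
  have rint: "(LINT t:{L..U}|lborel. r t) = (C-1)*(0-L) + K1*m"
    unfolding r_def using int_ind[of L L 0 U] int_ind[of L 0 m U] L mU m0'
    by (simp add: set_integral_add(2) int_ind_integrable)
  have Qi: "set_integrable lborel {L..U} (\<lambda>t. C * Qf \<phi> q2 t - Qf \<phi> q1 t)"
    using layer1(2)[OF L(1) U] layer2(2)[OF L(1) U] by auto
  have Qint: "(LINT t:{L..U}|lborel. C * Qf \<phi> q2 t - Qf \<phi> q1 t) = C * (LINT t:{L..U}|lborel. Qf \<phi> q2 t) - (LINT t:{L..U}|lborel. Qf \<phi> q1 t)"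
    using layer1(2)[OF L(1) U] layer2(2)[OF L(1) U] by (simp add: set_integral_diff)
  have pt: "r t \<le> C * Qf \<phi> q2 t - Qf \<phi> q1 t" if t: "t \<in> {L..U}" for t
  proof -
    define s where "s = splitpt \<phi> t"
    have s01: "s \<in> {0..1}" using split_props(1)[OF mono] s_def by simp
    have Q2nn: "0 \<le> Qf \<phi> q2 t" using Qf_nonneg q02 by auto
    have mon: "Qf \<phi> q1 t \<le> Qf \<phi> q2 t" by (rule Qmono)
    show ?thesis
    proof (cases "t < 0")
      case True
      have "s \<le> xt2"
      proof (rule ccontr)
        assume "\<not> s \<le> xt2"
        then have "\<phi> xt2 \<le> t" using split_props(2)[OF mono, of xt2 t] xs s_def by auto
        then show False using True m0 by simp
      qed
      have "C * F2 s \<le> F1 s"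
      proof (cases "s = 0")
        case True then show ?thesis using F_ends by simp
      next
        case False then show ?thesis using cdfA[of s] s01 \<open>s \<le> xt2\<close> xs by (auto simp: F1_def F2_def)
      qed
      moreover have "r t = C - 1" using True t by (simp add: r_def)
      ultimately show ?thesis by (simp add: Q1 Q2 s_def[symmetric] algebra_simps)
    next
      case False
      show ?thesis
      proof (cases "t < m")
        case True
        have "(LINT x:{xt2..x2}|lborel. q2 x) \<le> Qf \<phi> q2 t"
        proof (rule Qf_ge[OF qi2 q02])
          fix x assume "x \<in> {xt2..x2}"
          then have "\<phi> xt2 \<le> \<phi> x" using monoD[OF mono] by auto
          then show "t < \<phi> x" using True m_def by simp
        qed (use xs in auto)
        moreover have "c * (x2 - xt2) \<le> (LINT x:{xt2..x2}|lborel. q2 x)"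
          by (rule int_lower) (use xs dens2 in \<open>auto intro: set_integrable_subset[OF qi2]\<close>)
        ultimately have "c * (x2 - xt2) \<le> Qf \<phi> q2 t" by simp
        then have "(C-1) * (c * (x2 - xt2)) \<le> (C-1) * Qf \<phi> q2 t" using C1 by (intro mult_left_mono) auto
        moreover have "r t = K1" using True False by (simp add: r_def)
        ultimately show ?thesis using mon by (simp add: K1_def algebra_simps)
      next
        case False': False
        have "r t = 0" using False False' by (simp add: r_def)
        moreover have "0 \<le> (C-1) * Qf \<phi> q2 t" using C1 Q2nn by simp
        ultimately show ?thesis using mon by (simp add: algebra_simps)
      qed
    qed
  qed
  have "(LINT t:{L..U}|lborel. r t) \<le> (LINT t:{L..U}|lborel. C * Qf \<phi> q2 t - Qf \<phi> q1 t)"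
    by (rule set_integral_mono[OF ri Qi pt])
  then have "(C-1)*(0-L) + K1*m \<le> C * (LINT t:{L..U}|lborel. Qf \<phi> q2 t) - (LINT t:{L..U}|lborel. Qf \<phi> q1 t)"
    using rint Qint by simp
  then show ?thesis using layer1(1)[OF L(1) U] layer2(1)[OF L(1) U]
    by (simp add: K1_def m_def algebra_simps)
qed

lemma caseB:
  assumes m0: "\<phi> xt1 < 0"
  shows "(C-1)*c*(xt1-x1) * (- \<phi> xt1) \<le> (LINT x:{0..1}|lborel. \<phi> x * q2 x) - C * (LINT x:{0..1}|lborel. \<phi> x * q1 x)"
proof -
  define m where "m = - \<phi> xt1"
  define L where "L = min (\<phi> 0) 0"
  define U where "U = max (\<phi> 1) 0"
  define K2 where "K2 = (C-1)*c*(xt1-x1)"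
  have L: "L \<le> \<phi> 0" "L \<le> 0" and U: "\<phi> 1 \<le> U" "0 \<le> U" by (auto simp: L_def U_def)
  have mL: "L \<le> -m" using monoD[OF mono, of 0 xt1] xs by (simp add: m_def L_def)
  have m0': "0 < m" using m0 by (simp add: m_def)
  define r where "r t = K2*indicator {-m..<0} t - (C-1)*indicator {L..<0} t" for t :: real
  have ri: "set_integrable lborel {L..U} r"
    unfolding r_def by (intro set_integral_diff(1) int_ind_integrable)
  have rint: "(LINT t:{L..U}|lborel. r t) = K2*m - (C-1)*(0-L)"
    unfolding r_def using int_ind[of L L 0 U] int_ind[of L "-m" 0 U] L U mL m0'
    by (simp add: set_integral_diff(2) int_ind_integrable)
  have Qi: "set_integrable lborel {L..U} (\<lambda>t. Qf \<phi> q2 t - C * Qf \<phi> q1 t)"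
    using layer1(2)[OF L(1) U(1)] layer2(2)[OF L(1) U(1)] by auto
  have Qint: "(LINT t:{L..U}|lborel. Qf \<phi> q2 t - C * Qf \<phi> q1 t) = (LINT t:{L..U}|lborel. Qf \<phi> q2 t) - C * (LINT t:{L..U}|lborel. Qf \<phi> q1 t)"
    using layer1(2)[OF L(1) U(1)] layer2(2)[OF L(1) U(1)] by (simp add: set_integral_diff)
  have pt: "r t \<le> Qf \<phi> q2 t - C * Qf \<phi> q1 t" if t: "t \<in> {L..U}" for t
  proof -
    define s where "s = splitpt \<phi> t"
    have s01: "s \<in> {0..1}" using split_props(1)[OF mono] s_def by simp
    have mon: "Qf \<phi> q1 t \<le> Qf \<phi> q2 t" by (rule Qmono)
    have le1: "Qf \<phi> q1 t \<le> 1" by (rule Q_le1)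
    show ?thesis
    proof (cases "t < 0")
      case False
      have "xt1 \<le> s"
      proof (rule ccontr)
        assume "\<not> xt1 \<le> s"
        then have "t < \<phi> xt1" using split_props(3)[OF mono, of xt1 t] xs s_def by auto
        then show False using False m0 by simp
      qed
      have "C * (1 - F1 s) \<le> 1 - F2 s"
      proof (cases "s = 1")
        case True then show ?thesis using F_ends by simp
      next
        case False then show ?thesis using cdfB[of s] s01 \<open>xt1 \<le> s\<close> xs by (auto simp: F1_def F2_def)
      qed
      moreover have "r t = 0" using False by (simp add: r_def)
      ultimately show ?thesis by (simp add: Q1 Q2 s_def[symmetric] algebra_simps)
    next
      case True
      have base: "0 \<le> (C-1) * (1 - Qf \<phi> q1 t)" using C1 le1 by simp
      show ?thesis
      proof (cases "t < -m")
        case True': True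
        have "r t = - (C-1)" using True True' t by (simp add: r_def)
        then show ?thesis using mon base by (simp add: algebra_simps)
      next
        case False
        have "(LINT x:{x1..xt1}|lborel. q1 x) \<le> (LINT x:{0..1}|lborel. q1 x) - Qf \<phi> q1 t"
        proof (rule Qf_compl_ge[OF qi1 q01])
          fix x assume "x \<in> {x1..xt1}"
          then have "\<phi> x \<le> \<phi> xt1" using monoD[OF mono] by auto
          then show "\<phi> x \<le> t" using False m_def by simp
        qed (use xs in auto)
        moreover have "c * (xt1 - x1) \<le> (LINT x:{x1..xt1}|lborel. q1 x)"
          by (rule int_lower) (use xs dens1 in \<open>auto intro: set_integrable_subset[OF qi1]\<close>)
        ultimately have "c * (xt1 - x1) \<le> 1 - Qf \<phi> q1 t" using tot1 by simp
        then have "(C-1) * (c * (xt1 - x1)) \<le> (C-1) * (1 - Qf \<phi> q1 t)" using C1 by (intro mult_left_mono) auto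
        moreover have "r t = K2 - (C-1)" using True False t by (simp add: r_def)
        ultimately show ?thesis using mon by (simp add: K2_def algebra_simps)
      qed
    qed
  qed
  have "(LINT t:{L..U}|lborel. r t) \<le> (LINT t:{L..U}|lborel. Qf \<phi> q2 t - C * Qf \<phi> q1 t)"
    by (rule set_integral_mono[OF ri Qi pt])
  then have "K2*m - (C-1)*(0-L) \<le> (LINT t:{L..U}|lborel. Qf \<phi> q2 t) - C * (LINT t:{L..U}|lborel. Qf \<phi> q1 t)"
    using rint Qint by simp
  then show ?thesis using layer1(1)[OF L(1) U(1)] layer2(1)[OF L(1) U(1)]
    by (simp add: K2_def m_def algebra_simps)
qed


lemma combined:
  "(C-1)*c*min (x2-xt2) (xt1-x1) * max \<bar>\<phi> xt1\<bar> \<bar>\<phi> xt2\<bar>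
     \<le> C * (max (LINT x:{0..1}|lborel. \<phi> x * q2 x) 0 + max (- (LINT x:{0..1}|lborel. \<phi> x * q1 x)) 0)"
proof -
  define g1 where "g1 = (LINT x:{0..1}|lborel. \<phi> x * q1 x)"
  define g2 where "g2 = (LINT x:{0..1}|lborel. \<phi> x * q2 x)"
  define K where "K = (C-1)*c*min (x2-xt2) (xt1-x1)"
  have K0: "0 \<le> K" using C1 c0 xs by (simp add: K_def)
  have Ka: "K \<le> (C-1)*c*(x2-xt2)" "K \<le> (C-1)*c*(xt1-x1)"
    using C1 c0 by (auto simp: K_def intro!: mult_left_mono)
  have mono12: "\<phi> xt1 \<le> \<phi> xt2" using monoD[OF mono] xs by simp
  have RHS: "C * g2 - g1 \<le> C * (max g2 0 + max (- g1) 0)" "g2 - C * g1 \<le> C * (max g2 0 + max (- g1) 0)"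
  proof -
    have a: "C*g2 \<le> C*max g2 0" "C*(-g1) \<le> C*max (-g1) 0" using C1 by (intro mult_left_mono; simp)+
    have b: "1 * max g2 0 \<le> C * max g2 0" "1 * max (-g1) 0 \<le> C * max (-g1) 0"
      using C1 by (intro mult_right_mono; simp)+
    show "C * g2 - g1 \<le> C * (max g2 0 + max (- g1) 0)" "g2 - C * g1 \<le> C * (max g2 0 + max (- g1) 0)"
      using a b by (simp_all add: algebra_simps)
  qed
  have "K * max \<bar>\<phi> xt1\<bar> \<bar>\<phi> xt2\<bar> \<le> C * (max g2 0 + max (- g1) 0)"
  proof (cases "0 < \<phi> xt2 \<and> - \<phi> xt1 \<le> \<phi> xt2")
    case True
    then have M: "max \<bar>\<phi> xt1\<bar> \<bar>\<phi> xt2\<bar> = \<phi> xt2" using mono12 by auto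
    have "K * \<phi> xt2 \<le> (C-1)*c*(x2-xt2) * \<phi> xt2" using Ka True by (intro mult_right_mono) auto
    also have "\<dots> \<le> C * g2 - g1" using caseA True by (simp add: g1_def g2_def)
    finally show ?thesis using M RHS by simp
  next
    case False
    show ?thesis
    proof (cases "\<phi> xt1 < 0")
      case True
      then have M: "max \<bar>\<phi> xt1\<bar> \<bar>\<phi> xt2\<bar> = - \<phi> xt1" using mono12 False by auto
      have "K * (- \<phi> xt1) \<le> (C-1)*c*(xt1-x1) * (- \<phi> xt1)" using Ka True by (intro mult_right_mono) auto
      also have "\<dots> \<le> g2 - C * g1" using caseB True by (simp add: g1_def g2_def)
      finally show ?thesis using M RHS by simp
    next
      case False': False
      then have M: "max \<bar>\<phi> xt1\<bar> \<bar>\<phi> xt2\<bar> = 0" using mono12 False by auto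
      have "0 \<le> C * (max g2 0 + max (- g1) 0)" using C1 by simp
      then show ?thesis unfolding M by simp
    qed
  qed
  then show ?thesis by (simp add: K_def g1_def g2_def)
qed

end


locale setting =
  fixes f :: "real \<Rightarrow> real \<Rightarrow> real" and c_f c_W C_F C_W w1 w2 x1 x2 xt1 xt2 :: real
  assumes fmeas: "(\<lambda>p. f (fst p) (snd p)) \<in> borel_measurable lborel"
    and fnn: "\<forall>x\<in>{0..1}. \<forall>w\<in>{0..1}. 0 \<le> f x w"
    and Fmono: "\<forall>x w' w''. x \<in> {0<..<1} \<and> w' \<in> {0<..<1} \<and> w'' \<in> {0<..<1} \<and> w' \<le> w''
            \<longrightarrow> condCDF f x w' \<ge> condCDF f x w''"
    and FA: "\<forall>x \<in> {0<..<x2}. condCDF f x w1 \<ge> C_F * condCDF f x w2"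
    and FB: "\<forall>x \<in> {x1<..<1}. C_F * (1 - condCDF f x w1) \<le> 1 - condCDF f x w2"
    and Fdens: "\<forall>x \<in> {x1..x2}. \<forall>w \<in> {w1, w2}. condDens f x w \<ge> c_f"
    and fWb: "\<forall>w \<in> {0..1}. c_W \<le> fW f w \<and> fW f w \<le> C_W"
    and xs: "0 \<le> x1" "x1 < xt1" "xt1 < xt2" "xt2 < x2" "x2 \<le> 1"
    and ws: "0 < w1" "w1 < w2" "w2 < 1"
    and cst: "C_F > 1" "c_f > 0" "c_W > 0"
begin

lemma fm2[measurable]: "(\<lambda>p. f (fst p) (snd p)) \<in> borel_measurable (lborel \<Otimes>\<^sub>M lborel)"
  using fmeas by (simp add: lborel_prod)

lemma fm[measurable]: "(\<lambda>x. f x w) \<in> borel_measurable borel"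
proof -
  have "(\<lambda>x. f x w) = (\<lambda>p. f (fst p) (snd p)) \<circ> (\<lambda>x. (x, w))" by auto
  moreover have "(\<lambda>x. (x, w)) \<in> measurable borel (lborel \<Otimes>\<^sub>M lborel)" by measurable
  ultimately show ?thesis using measurable_comp[OF _ fm2] by metis
qed

lemma fWpos: "w \<in> {0..1} \<Longrightarrow> 0 < fW f w"
  using fWb cst by force

lemma fi: assumes "w \<in> {0..1}" shows "set_integrable lborel {0..1} (\<lambda>x. f x w)"
proof (rule ccontr)
  assume "\<not> ?thesis"
  then have "fW f w = 0" unfolding fW_def set_lebesgue_integral_def set_integrable_def
    by (simp add: not_integrable_integral_eq)
  then show False using fWpos[OF assms] by simp
qed

definition "q w x = f x w / fW f w"

lemma qm[measurable]: "q w \<in> borel_measurable borel"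
  unfolding q_def by measurable

lemma qi: "w \<in> {0..1} \<Longrightarrow> set_integrable lborel {0..1} (q w)"
  unfolding q_def using fi by auto

lemma q0: assumes "w \<in> {0..1}" "x \<in> {0..1}" shows "0 \<le> q w x"
  unfolding q_def using fnn fWpos[OF assms(1)] assms by (auto intro!: divide_nonneg_pos)

lemma qtot: assumes "w \<in> {0..1}" shows "(LINT x:{0..1}|lborel. q w x) = 1"
  unfolding q_def using fWpos[OF assms] by (simp add: fW_def[symmetric])

lemma cdf_q: "condCDF f s w = (LINT x:{0..s}|lborel. q w x)"
  unfolding q_def condCDF_def by simp

lemma dens_q: "condDens f x w = q w x"
  unfolding q_def condDens_def by simp


lemma gmono_w:
  assumes mono: "mono \<phi>" and w: "w' \<in> {0<..<1}" "w'' \<in> {0<..<1}" "w' \<le> w''"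
  shows "(LINT x:{0..1}|lborel. \<phi> x * q w' x) \<le> (LINT x:{0..1}|lborel. \<phi> x * q w'' x)"
proof -
  have w01: "w' \<in> {0..1}" "w'' \<in> {0..1}" using w by auto
  interpret dens_pair \<phi> "q w'" "q w''"
  proof
    show "\<And>s. s \<in> {0<..<1} \<Longrightarrow> (LINT x:{0..s}|lborel. q w'' x) \<le> (LINT x:{0..s}|lborel. q w' x)"
      using Fmono w by (auto simp: cdf_q)
  qed (use mono w01 qi q0 qtot in auto)
  show ?thesis by (rule g_mono)
qed

lemma comb:
  assumes mono: "mono \<phi>"
  shows "(C_F-1)*c_f*min (x2-xt2) (xt1-x1) * max \<bar>\<phi> xt1\<bar> \<bar>\<phi> xt2\<bar>
     \<le> C_F * (max (LINT x:{0..1}|lborel. \<phi> x * q w2 x) 0 + max (- (LINT x:{0..1}|lborel. \<phi> x * q w1 x)) 0)"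
proof -
  have w01: "w1 \<in> {0..1}" "w2 \<in> {0..1}" using ws by auto
  interpret dens_pair2 \<phi> "q w1" "q w2" C_F c_f x1 x2 xt1 xt2
  proof
    show "\<And>s. s \<in> {0<..<1} \<Longrightarrow> (LINT x:{0..s}|lborel. q w2 x) \<le> (LINT x:{0..s}|lborel. q w1 x)"
      using Fmono ws by (auto simp: cdf_q)
    show "\<And>s. s \<in> {0<..<x2} \<Longrightarrow> C_F * (LINT x:{0..s}|lborel. q w2 x) \<le> (LINT x:{0..s}|lborel. q w1 x)"
      using FA by (auto simp: cdf_q)
    show "\<And>s. s \<in> {x1<..<1} \<Longrightarrow> C_F * (1 - (LINT x:{0..s}|lborel. q w1 x)) \<le> 1 - (LINT x:{0..s}|lborel. q w2 x)"
      using FB by (auto simp: cdf_q)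
    show "\<And>x. x \<in> {x1..x2} \<Longrightarrow> c_f \<le> q w1 x" "\<And>x. x \<in> {x1..x2} \<Longrightarrow> c_f \<le> q w2 x"
      using Fdens by (auto simp: dens_q)
  qed (use mono w01 qi q0 qtot xs cst in auto)
  show ?thesis by (rule combined)
qed


definition "clp x = max 0 (min 1 (x::real))"

lemma phi_mono:
  assumes hH: "h \<in> Hclass a" and b: "a \<le> b" "0 \<le> b"
  shows "mono (\<lambda>x. h (clp x) + b * clp x)"
proof (rule monoI)
  fix x y :: real assume xy: "x \<le> y"
  define u v where "u = clp x" and "v = clp y"
  have uv: "0 \<le> u" "u \<le> v" "v \<le> 1" using xy by (auto simp: u_def v_def clp_def)
  show "h (clp x) + b * clp x \<le> h (clp y) + b * clp y"
    unfolding u_def[symmetric] v_def[symmetric]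
  proof (cases "u = v")
    case False
    then have "u < v" using uv by simp
    then have "- a \<le> (h v - h u) / (v - u)" using hH uv by (auto simp: Hclass_def)
    then have "- a * (v - u) \<le> h v - h u" using \<open>u < v\<close> by (simp add: pos_le_divide_eq)
    moreover have "- b * (v - u) \<le> - a * (v - u)" using b \<open>u < v\<close> by (intro mult_right_mono) auto
    ultimately show "h u + b * u \<le> h v + b * v" by (simp add: algebra_simps)
  qed simp
qed

lemma clp_id: "x \<in> {0..1} \<Longrightarrow> clp x = x"
  by (auto simp: clp_def)

lemma gphi_facts:
  assumes mono: "mono \<phi>" and w: "w \<in> {0..1}"
  shows "set_integrable lborel {0..1} (\<lambda>x. \<phi> x * q w x)"
    "set_integrable lborel {0..1} (\<lambda>x. x * q w x)"
    "\<phi> 0 \<le> (LINT x:{0..1}|lborel. \<phi> x * q w x)" "(LINT x:{0..1}|lborel. \<phi> x * q w x) \<le> \<phi> 1"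
    "0 \<le> (LINT x:{0..1}|lborel. x * q w x)" "(LINT x:{0..1}|lborel. x * q w x) \<le> 1"
proof -
  have pm[measurable]: "\<phi> \<in> borel_measurable borel" using borel_measurable_mono[OF mono] .
  have qi': "integrable lborel (\<lambda>x. indicator {0..1} x * q w x)" using qi[OF w] by (simp add: set_integrable_def)
  have b01: "\<phi> 0 \<le> \<phi> x" "\<phi> x \<le> \<phi> 1" if "x \<in> {0..1}" for x using that monoD[OF mono] by auto
  show i1: "set_integrable lborel {0..1} (\<lambda>x. \<phi> x * q w x)"
    unfolding set_integrable_def
  proof (rule Bochner_Integration.integrable_bound[OF integrable_mult_right[OF qi', of "\<bar>\<phi> 0\<bar> + \<bar>\<phi> 1\<bar>"]])
    show "AE x in lborel. norm (indicator {0..1} x *\<^sub>R (\<phi> x * q w x)) \<le> norm ((\<bar>\<phi> 0\<bar> + \<bar>\<phi> 1\<bar>) * (indicator {0..1} x * q w x))"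
    proof (rule AE_I2)
      fix x show "norm (indicator {0..1} x *\<^sub>R (\<phi> x * q w x)) \<le> norm ((\<bar>\<phi> 0\<bar> + \<bar>\<phi> 1\<bar>) * (indicator {0..1} x * q w x))"
      proof (cases "x \<in> {0..1}")
        case True
        have "\<bar>\<phi> x\<bar> \<le> \<bar>\<phi> 0\<bar> + \<bar>\<phi> 1\<bar>" using b01[OF True] by linarith
        then show ?thesis using True q0[OF w True] by (simp add: abs_mult mult_right_mono)
      qed simp
    qed
  qed measurable
  show i2: "set_integrable lborel {0..1} (\<lambda>x. x * q w x)"
    unfolding set_integrable_def
  proof (rule Bochner_Integration.integrable_bound[OF qi'])
    show "AE x in lborel. norm (indicator {0..1} x *\<^sub>R (x * q w x)) \<le> norm (indicator {0..1} x * q w x)"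
    proof (rule AE_I2)
      fix x show "norm (indicator {0..1} x *\<^sub>R (x * q w x)) \<le> norm (indicator {0..1} x * q w x)"
      proof (cases "x \<in> {0..1}")
        case True
        then show ?thesis using True q0[OF w True] by (simp add: abs_mult mult_left_le_one_le)
      qed simp
    qed
  qed measurable
  have "(LINT x:{0..1}|lborel. \<phi> 0 * q w x) \<le> (LINT x:{0..1}|lborel. \<phi> x * q w x)"
    by (rule set_integral_mono) (use i1 qi[OF w] b01 q0[OF w] in \<open>auto intro: mult_right_mono\<close>)
  then show "\<phi> 0 \<le> (LINT x:{0..1}|lborel. \<phi> x * q w x)" using qtot[OF w] by simp
  have "(LINT x:{0..1}|lborel. \<phi> x * q w x) \<le> (LINT x:{0..1}|lborel. \<phi> 1 * q w x)"
    by (rule set_integral_mono) (use i1 qi[OF w] b01 q0[OF w] in \<open>auto intro: mult_right_mono\<close>)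
  then show "(LINT x:{0..1}|lborel. \<phi> x * q w x) \<le> \<phi> 1" using qtot[OF w] by simp
  have z: "set_integrable lborel {0..1} (\<lambda>x. 0::real)" by (simp add: set_integrable_def)
  have "(LINT x:{0..1}|lborel. 0 * q w x) \<le> (LINT x:{0..1}|lborel. x * q w x)"
    by (rule set_integral_mono) (use i2 z q0[OF w] in \<open>auto intro: mult_right_mono\<close>)
  then show "0 \<le> (LINT x:{0..1}|lborel. x * q w x)" by simp
  have "(LINT x:{0..1}|lborel. x * q w x) \<le> (LINT x:{0..1}|lborel. 1 * q w x)"
    by (rule set_integral_mono) (use i2 qi[OF w] q0[OF w] in \<open>auto intro!: mult_left_le_one_le\<close>)
  then show "(LINT x:{0..1}|lborel. x * q w x) \<le> 1" using qtot[OF w] by simp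
qed

lemma Top_eq:
  assumes mono: "mono \<phi>" and w: "w \<in> {0..1}" and heq: "\<And>x. x \<in> {0..1} \<Longrightarrow> h x = \<phi> x - b * x"
  shows "Top f h w = fW f w * ((LINT x:{0..1}|lborel. \<phi> x * q w x) - b * (LINT x:{0..1}|lborel. x * q w x))"
proof -
  note gf = gphi_facts[OF mono w]
  have "Top f h w = (LINT x:{0..1}|lborel. fW f w * (\<phi> x * q w x - b * (x * q w x)))"
    unfolding Top_def
  proof (rule set_lebesgue_integral_cong)
    show "\<forall>x::real. x \<in> {0..1} \<longrightarrow> h x * f x w = fW f w * (\<phi> x * q w x - b * (x * q w x))"
    proof (intro allI impI)
      fix x :: real assume x: "x \<in> {0..1}"
      show "h x * f x w = fW f w * (\<phi> x * q w x - b * (x * q w x))"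
        using fWpos[OF w] unfolding heq[OF x] q_def by (simp add: field_simps)
    qed
  qed simp
  also have "\<dots> = fW f w * ((LINT x:{0..1}|lborel. \<phi> x * q w x) - b * (LINT x:{0..1}|lborel. x * q w x))"
    using gf(1,2) by (simp add: set_integral_diff)
  finally show ?thesis .
qed


lemma Top_meas:
  assumes hL2: "L2 h"
  shows "Top f h \<in> borel_measurable lborel"
proof -
  define H where "H x = indicator {0..1} x *\<^sub>R h x" for x :: real
  have Hm[measurable]: "H \<in> borel_measurable lborel"
    using hL2 unfolding L2_def H_def set_borel_measurable_def by simp
  have swap: "(\<lambda>p. f (snd p) (fst p)) \<in> borel_measurable (lborel \<Otimes>\<^sub>M lborel)"
  proof -
    have "(\<lambda>p. f (snd p) (fst p)) = (\<lambda>p. f (fst p) (snd p)) \<circ> (\<lambda>(x,y). (y,x))" by auto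
    then show ?thesis using measurable_comp[OF measurable_pair_swap' fm2] by metis
  qed
  have "case_prod (\<lambda>w x. H x * f x w) \<in> borel_measurable (lborel \<Otimes>\<^sub>M lborel)"
  proof -
    have "case_prod (\<lambda>w x. H x * f x w) = (\<lambda>p. H (snd p) * f (snd p) (fst p))" by auto
    moreover have "(\<lambda>p. H (snd p)) \<in> borel_measurable (lborel \<Otimes>\<^sub>M lborel)"
      using measurable_comp[OF measurable_snd Hm] by (simp add: comp_def)
    ultimately show ?thesis using borel_measurable_times[OF _ swap] by metis
  qed
  then have "(\<lambda>w. \<integral>x. H x * f x w \<partial>lborel) \<in> borel_measurable lborel"
    by (rule lborel.borel_measurable_lebesgue_integral)
  moreover have "Top f h = (\<lambda>w. \<integral>x. H x * f x w \<partial>lborel)"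
    unfolding Top_def set_lebesgue_integral_def H_def by (auto simp: fun_eq_iff mult_ac)
  ultimately show ?thesis by simp
qed

lemma Top_sq_int:
  assumes hL2: "L2 h" and bound: "\<And>w. w\<in>{0..1} \<Longrightarrow> \<bar>Top f h w\<bar> \<le> B"
  shows "set_integrable lborel {0..1} (\<lambda>w. (Top f h w)^2)"
proof -
  have [measurable]: "Top f h \<in> borel_measurable lborel" by (rule Top_meas[OF hL2])
  have "integrable lborel (\<lambda>w::real. B^2 * indicator {0..1} w :: real)"
    by (intro integrable_mult_right) (simp add: integrable_indicator_iff emeasure_lborel_Icc_eq)
  then show ?thesis unfolding set_integrable_def
  proof (rule Bochner_Integration.integrable_bound)
    show "AE x in lborel. norm (indicator {0..1} x *\<^sub>R (Top f h x)\<^sup>2) \<le> norm (B\<^sup>2 * indicator {0..1} x)"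
    proof (rule AE_I2)
      fix x :: real show "norm (indicator {0..1} x *\<^sub>R (Top f h x)\<^sup>2) \<le> norm (B\<^sup>2 * indicator {0..1} x)"
      proof (cases "x \<in> {0..1}")
        case True
        have "\<bar>Top f h x\<bar>^2 \<le> \<bar>B\<bar>^2" using bound[OF True] by (intro power_mono) auto
        then show ?thesis using True by simp
      qed simp
    qed
  qed measurable
qed


lemma per_h:
  fixes h :: "real \<Rightarrow> real" and a :: real
  defines "K \<equiv> (C_F-1)*c_f*min (x2-xt2) (xt1-x1)" and "\<eta> \<equiv> sqrt (1/(xt2-xt1))"
  assumes hH: "h \<in> Hclass a" and tn: "trunc_norm xt1 xt2 h = 1"
    and bsm: "max a 0 \<le> K * \<eta> / (2*(K + C_F))"
  shows "c_W^2 * min w1 (1-w2) * (K * \<eta> / (2*C_F))^2 / 2 \<le> (LINT w:{0..1}|lborel. (Top f h w)^2)"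
proof -
  define b where "b = max a 0"
  have b0: "0 \<le> b" "a \<le> b" by (auto simp: b_def)
  define \<phi> where "\<phi> x = h (clp x) + b * clp x" for x
  have mono: "mono \<phi>" unfolding \<phi>_def by (rule phi_mono[OF hH b0(2,1)])
  have heq: "h x = \<phi> x - b * x" if "x \<in> {0..1}" for x using that by (simp add: \<phi>_def clp_id)
  define G where "G w = (LINT x:{0..1}|lborel. \<phi> x * q w x)" for w
  define E where "E w = (LINT x:{0..1}|lborel. x * q w x)" for w
  have TopE: "Top f h w = fW f w * (G w - b * E w)" if "w \<in> {0..1}" for w
    using Top_eq[OF mono that heq] by (simp add: G_def E_def)
  have hL2: "L2 h" using hH by (simp add: Hclass_def)
  have Tb: "\<bar>Top f h w\<bar> \<le> C_W * (\<bar>\<phi> 0\<bar> + \<bar>\<phi> 1\<bar> + b)" if w: "w \<in> {0..1}" for w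
  proof -
    note gf = gphi_facts[OF mono w]
    have "\<bar>G w - b * E w\<bar> \<le> \<bar>\<phi> 0\<bar> + \<bar>\<phi> 1\<bar> + b"
    proof -
      have "\<bar>G w\<bar> \<le> \<bar>\<phi> 0\<bar> + \<bar>\<phi> 1\<bar>" using gf(3,4) unfolding G_def by linarith
      moreover have "\<bar>b * E w\<bar> \<le> b" using gf(5,6) b0 by (simp add: E_def abs_mult mult_left_le)
      ultimately show ?thesis by linarith
    qed
    moreover have "0 < fW f w" "fW f w \<le> C_W" using fWpos[OF w] fWb w by auto
    ultimately show ?thesis using TopE[OF w]
      by (simp add: abs_mult) (rule mult_mono; simp)
  qed
  have Tint: "set_integrable lborel {0..1} (\<lambda>w. (Top f h w)^2)"
    by (rule Top_sq_int[OF hL2 Tb])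
  define \<alpha> where "\<alpha> = max (- G w1) 0"
  define \<beta> where "\<beta> = max (G w2 - b) 0"
  define R where "R w = c_W^2 * (\<alpha>^2 * indicator {0<..<w1} w + \<beta>^2 * indicator {w2..<1} w)" for w :: real
  have Rint: "set_integrable lborel {0..1} R"
    unfolding R_def using int_ind_oo_integrable[of 0 1 "\<alpha>^2" 0 w1] int_ind_integrable[of 0 1 "\<beta>^2" w2 1]
    by (intro set_integrable_mult_right set_integral_add(1)) auto
  have Rval: "(LINT w:{0..1}|lborel. R w) = c_W^2 * (\<alpha>^2 * w1 + \<beta>^2 * (1 - w2))"
    unfolding R_def using int_ind_oo_integrable[of 0 1 "\<alpha>^2" 0 w1] int_ind_integrable[of 0 1 "\<beta>^2" w2 1]
      int_ind_oo[of 0 0 w1 1] int_ind[of 0 w2 1 1] ws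
    by (simp add: set_integral_add(2))
  have Rle: "R w \<le> (Top f h w)^2" if w: "w \<in> {0..1}" for w
  proof -
    define g where "g = G w - b * E w"
    note gf = gphi_facts[OF mono w]
    have E01: "0 \<le> E w" "E w \<le> 1" using gf(5,6) by (auto simp: E_def)
    have "c_W^2 \<le> (fW f w)^2" using fWb w cst by (intro power_mono) auto
    then have T2: "c_W^2 * g^2 \<le> (Top f h w)^2"
      using TopE[OF w] by (simp add: g_def power_mult_distrib mult_right_mono)
    have "\<alpha>^2 * indicator {0<..<w1} w + \<beta>^2 * indicator {w2..<1} w \<le> g^2"
    proof (cases "w \<in> {0<..<w1}")
      case True
      then have nw2: "w \<notin> {w2..<1}" using ws by auto
      have "G w \<le> G w1" unfolding G_def by (rule gmono_w[OF mono]) (use True ws in auto)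
      moreover have "0 \<le> b * E w" using b0 E01 by simp
      ultimately have gle: "g \<le> G w1" by (simp add: g_def)
      have "\<alpha>^2 \<le> g^2"
      proof (cases "G w1 < 0")
        case True
        then have "\<alpha> = - G w1" by (simp add: \<alpha>_def)
        then have "\<alpha> \<le> \<bar>g\<bar>" "0 \<le> \<alpha>" using gle True by auto
        then show ?thesis using power_mono[of \<alpha> "\<bar>g\<bar>" 2] by simp
      qed (simp add: \<alpha>_def)
      then show ?thesis using True nw2 by simp
    next
      case False
      show ?thesis
      proof (cases "w \<in> {w2..<1}")
        case True
        have "G w2 \<le> G w" unfolding G_def by (rule gmono_w[OF mono]) (use True ws in auto)
        moreover have "b * E w \<le> b" using b0 E01 by (simp add: mult_left_le)
        ultimately have gge: "G w2 - b \<le> g" by (simp add: g_def)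
        have "\<beta>^2 \<le> g^2"
        proof (cases "0 < G w2 - b")
          case True
          then have "\<beta> = G w2 - b" by (simp add: \<beta>_def)
          then have "\<beta> \<le> \<bar>g\<bar>" "0 \<le> \<beta>" using gge True by auto
          then show ?thesis using power_mono[of \<beta> "\<bar>g\<bar>" 2] by simp
        qed (simp add: \<beta>_def)
        then show ?thesis using True False by simp
      qed (use False in simp)
    qed
    then have "c_W^2 * (\<alpha>^2 * indicator {0<..<w1} w + \<beta>^2 * indicator {w2..<1} w) \<le> c_W^2 * g^2"
      by (intro mult_left_mono) auto
    then show ?thesis using T2 by (simp add: R_def)
  qed
  have low: "c_W^2 * (\<alpha>^2 * w1 + \<beta>^2 * (1 - w2)) \<le> (LINT w:{0..1}|lborel. (Top f h w)^2)"
    using set_integral_mono[OF Rint Tint Rle] Rval by simp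
  define M where "M = max \<bar>\<phi> xt1\<bar> \<bar>\<phi> xt2\<bar>"
  have combo: "K * M \<le> C_F * (max (G w2) 0 + \<alpha>)"
    using comb[OF mono] by (simp add: K_def M_def G_def \<alpha>_def)
  have trunc: "1 \<le> (M + b)^2 * (xt2 - xt1)"
  proof -
    have I1: "(LINT x:{xt1..xt2}|lborel. (h x)^2) = 1"
      using tn by (simp add: trunc_norm_def)
    then have hi: "set_integrable lborel {xt1..xt2} (\<lambda>x. (h x)^2)"
      unfolding set_integrable_def set_lebesgue_integral_def
      using not_integrable_integral_eq by force
    have ci: "set_integrable lborel {xt1..xt2} (\<lambda>x. (M + b)^2)"
      unfolding set_integrable_def using xs by (intro integrable_scaleR_left) (simp add: integrable_indicator_iff)
    have "(LINT x:{xt1..xt2}|lborel. (h x)^2) \<le> (LINT x:{xt1..xt2}|lborel. (M + b)^2)"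
    proof (rule set_integral_mono[OF hi ci])
      fix x assume x: "x \<in> {xt1..xt2}"
      then have x01: "x \<in> {0..1}" using xs by auto
      have "\<phi> xt1 \<le> \<phi> x" "\<phi> x \<le> \<phi> xt2" using x monoD[OF mono] by auto
      then have "\<bar>\<phi> x\<bar> \<le> M" by (auto simp: M_def)
      moreover have "\<bar>b * x\<bar> \<le> b" using b0 x01 by (simp add: abs_mult mult_left_le)
      ultimately have "\<bar>h x\<bar> \<le> M + b" using heq[OF x01] by linarith
      then show "(h x)^2 \<le> (M + b)^2" using power_mono[of "\<bar>h x\<bar>" "M + b" 2] by simp
    qed
    then show ?thesis using I1 xs by (simp add: set_integral_const mult.commute)
  qed
  have Kpos: "0 < K" unfolding K_def using cst xs by simp
  have lpos: "0 < xt2 - xt1" using xs by simp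
  have etapos: "0 < \<eta>" unfolding \<eta>_def using lpos by simp
  have ab0: "0 \<le> \<alpha>" "0 \<le> \<beta>" by (auto simp: \<alpha>_def \<beta>_def)
  have M0: "0 \<le> M" by (simp add: M_def)
  have t1: "\<eta> \<le> M + b"
  proof -
    have "1 / (xt2 - xt1) \<le> (M + b)^2" using trunc lpos by (simp add: pos_divide_le_eq)
    then have "\<eta> \<le> sqrt ((M + b)^2)" unfolding \<eta>_def by (rule real_sqrt_le_mono)
    then show ?thesis using M0 b0 by simp
  qed
  have t2: "max (G w2) 0 \<le> \<beta> + b" using b0 by (auto simp: \<beta>_def)
  have t3: "K * \<eta> / 2 \<le> C_F * (\<alpha> + \<beta>)"
  proof -
    have a1: "K * \<eta> \<le> K * M + K * b" using t1 Kpos by (simp add: distrib_left[symmetric] mult_left_mono)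
    have a2: "C_F * (max (G w2) 0 + \<alpha>) \<le> C_F * (\<beta> + b + \<alpha>)" using t2 cst by (intro mult_left_mono) auto
    have a3: "b * (K + C_F) \<le> K * \<eta> / 2"
      using bsm Kpos cst unfolding b_def[symmetric] by (simp add: pos_le_divide_eq mult.commute algebra_simps)
    show ?thesis using a1 a2 a3 combo by (simp add: algebra_simps)
  qed
  define N0 where "N0 = K * \<eta> / (2*C_F)"
  have N0: "0 \<le> N0" "N0 \<le> \<alpha> + \<beta>"
    using t3 Kpos etapos cst by (auto simp: N0_def pos_divide_le_eq algebra_simps)
  have t5: "N0^2 \<le> 2 * (\<alpha>^2 + \<beta>^2)"
  proof -
    have "N0^2 \<le> (\<alpha> + \<beta>)^2" using N0 by (intro power_mono) auto
    moreover have "(\<alpha> + \<beta>)^2 \<le> 2 * (\<alpha>^2 + \<beta>^2)" using sum_squares_ge_zero[of "\<alpha> - \<beta>" 0]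
      by (simp add: power2_eq_square algebra_simps)
    ultimately show ?thesis by linarith
  qed
  have t6: "min w1 (1-w2) * (\<alpha>^2 + \<beta>^2) \<le> \<alpha>^2 * w1 + \<beta>^2 * (1 - w2)"
  proof -
    have "min w1 (1-w2) * \<alpha>^2 \<le> w1 * \<alpha>^2" "min w1 (1-w2) * \<beta>^2 \<le> (1-w2) * \<beta>^2"
      by (intro mult_right_mono; simp)+
    then show ?thesis by (simp add: algebra_simps)
  qed
  have "c_W^2 * min w1 (1-w2) * N0^2 / 2 \<le> c_W^2 * (min w1 (1-w2) * (\<alpha>^2 + \<beta>^2))"
  proof -
    have "0 \<le> c_W^2 * min w1 (1-w2)" using ws by simp
    then have "c_W^2 * min w1 (1-w2) * N0^2 \<le> c_W^2 * min w1 (1-w2) * (2 * (\<alpha>^2 + \<beta>^2))"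
      using t5 by (intro mult_left_mono) auto
    then show ?thesis by (simp add: algebra_simps)
  qed
  also have "\<dots> \<le> c_W^2 * (\<alpha>^2 * w1 + \<beta>^2 * (1 - w2))"
    using t6 by (intro mult_left_mono) auto
  also have "\<dots> \<le> (LINT w:{0..1}|lborel. (Top f h w)^2)" by (rule low)
  finally show ?thesis by (simp add: N0_def)
qed

end


theorem corollary1:
  fixes c_f c_W C_F C_T w1 w2 x1 x2 xt1 xt2 :: real
  assumes "0 \<le> x1" "x1 < xt1" "xt1 < xt2" "xt2 < x2" "x2 \<le> 1"
    and "0 < w1" "w1 < w2" "w2 < 1"
    and "C_F > 1" "c_f > 0" "c_W > 0" "C_T \<ge> 0"
  shows "\<exists>c_tau C_tau. c_tau > 0 \<and> 0 < C_tau \<and>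
    (\<forall>(f :: real \<Rightarrow> real \<Rightarrow> real) C_W.
      ((\<lambda>p. f (fst p) (snd p)) \<in> borel_measurable lborel
      \<and> (\<forall>x\<in>{0..1}. \<forall>w\<in>{0..1}. 0 \<le> f x w)
      \<and> set_nn_integral lborel ({0..1}\<times>{0..1}) (\<lambda>p. ennreal (f (fst p) (snd p))) = 1
      \<and> (\<forall>x w' w''. x \<in> {0<..<1} \<and> w' \<in> {0<..<1} \<and> w'' \<in> {0<..<1} \<and> w' \<le> w''
            \<longrightarrow> condCDF f x w' \<ge> condCDF f x w'')
      \<and> (\<forall>x \<in> {0<..<x2}. condCDF f x w1 \<ge> C_F * condCDF f x w2)
      \<and> (\<forall>x \<in> {x1<..<1}. C_F * (1 - condCDF f x w1) \<le> 1 - condCDF f x w2)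
      \<and> set_nn_integral lborel ({0..1}\<times>{0..1}) (\<lambda>p. ennreal ((f (fst p) (snd p))^2)) \<le> ennreal C_T
      \<and> (\<forall>x \<in> {x1..x2}. \<forall>w \<in> {w1, w2}. condDens f x w \<ge> c_f)
      \<and> c_W \<le> C_W \<and> (\<forall>w \<in> {0..1}. c_W \<le> fW f w \<and> fW f w \<le> C_W))
      \<longrightarrow> (\<forall>a. a \<le> c_tau \<longrightarrow> tau xt1 xt2 f a \<le> ereal C_tau))"
proof -
  define K where "K = (C_F-1)*c_f*min (x2-xt2) (xt1-x1)"
  define \<eta> where "\<eta> = sqrt (1/(xt2-xt1))"
  define ct where "ct = K * \<eta> / (2*(K + C_F))"
  define D2 where "D2 = c_W^2 * min w1 (1-w2) * (K * \<eta> / (2*C_F))^2 / 2"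
  have Kpos: "0 < K" unfolding K_def using assms by simp
  have etapos: "0 < \<eta>" unfolding \<eta>_def using assms by simp
  have ctpos: "0 < ct" unfolding ct_def using Kpos etapos assms by simp
  have D2pos: "0 < D2" unfolding D2_def using Kpos etapos assms by simp
  show ?thesis
  proof (rule exI[where x=ct], rule exI[where x="1 / sqrt D2"], intro conjI allI impI)
    show "0 < ct" by (rule ctpos)
    show "0 < 1 / sqrt D2" using D2pos by simp
    fix f :: "real \<Rightarrow> real \<Rightarrow> real" and C_W a :: real
    assume H: "(\<lambda>p. f (fst p) (snd p)) \<in> borel_measurable lborel
      \<and> (\<forall>x\<in>{0..1}. \<forall>w\<in>{0..1}. 0 \<le> f x w)
      \<and> set_nn_integral lborel ({0..1}\<times>{0..1}) (\<lambda>p. ennreal (f (fst p) (snd p))) = 1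
      \<and> (\<forall>x w' w''. x \<in> {0<..<1} \<and> w' \<in> {0<..<1} \<and> w'' \<in> {0<..<1} \<and> w' \<le> w''
            \<longrightarrow> condCDF f x w' \<ge> condCDF f x w'')
      \<and> (\<forall>x \<in> {0<..<x2}. condCDF f x w1 \<ge> C_F * condCDF f x w2)
      \<and> (\<forall>x \<in> {x1<..<1}. C_F * (1 - condCDF f x w1) \<le> 1 - condCDF f x w2)
      \<and> set_nn_integral lborel ({0..1}\<times>{0..1}) (\<lambda>p. ennreal ((f (fst p) (snd p))^2)) \<le> ennreal C_T
      \<and> (\<forall>x \<in> {x1..x2}. \<forall>w \<in> {w1, w2}. condDens f x w \<ge> c_f)
      \<and> c_W \<le> C_W \<and> (\<forall>w \<in> {0..1}. c_W \<le> fW f w \<and> fW f w \<le> C_W)"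
      and a: "a \<le> ct"
    interpret setting f c_f c_W C_F C_W w1 w2 x1 x2 xt1 xt2
      using H assms by unfold_locales auto
    show "tau xt1 xt2 f a \<le> ereal (1 / sqrt D2)"
      unfolding tau_def
    proof (rule Sup_least)
      fix y assume "y \<in> (\<lambda>h. if L2norm (Top f h) = 0 then \<infinity>
        else ereal (trunc_norm xt1 xt2 h / L2norm (Top f h))) ` {h \<in> Hclass a. trunc_norm xt1 xt2 h = 1}"
      then obtain h where h: "h \<in> Hclass a" "trunc_norm xt1 xt2 h = 1"
        and y: "y = (if L2norm (Top f h) = 0 then \<infinity> else ereal (trunc_norm xt1 xt2 h / L2norm (Top f h)))"
        by auto
      have "max a 0 \<le> ct" using a ctpos by simp
      then have "D2 \<le> (LINT w:{0..1}|lborel. (Top f h w)^2)"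
        using per_h[OF h] by (simp add: D2_def K_def \<eta>_def ct_def)
      then have "sqrt D2 \<le> L2norm (Top f h)" unfolding L2norm_def by (rule real_sqrt_le_mono)
      moreover have "0 < sqrt D2" using D2pos by simp
      ultimately have pos: "0 < L2norm (Top f h)" "sqrt D2 \<le> L2norm (Top f h)" "0 < sqrt D2" by linarith+
      then have "1 / L2norm (Top f h) \<le> 1 / sqrt D2"
        using divide_left_mono[of "sqrt D2" "L2norm (Top f h)" 1] pos(2) mult_pos_pos[OF pos(1) pos(3)] by linarith
      moreover have "L2norm (Top f h) \<noteq> 0" using pos(1) by linarith
      ultimately have "L2norm (Top f h) \<noteq> 0" "1 / L2norm (Top f h) \<le> 1 / sqrt D2" by auto
      then show "y \<le> ereal (1 / sqrt D2)" using y h(2) by simp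
    qed
  qed
qed

end
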